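(* Let $G=(V,E,H)$ be a HEDG and $W,X,Y,Z\subseteq V$ with $(X\cup Y\cup Z)\cap W=\emptyset$. Then $X$ is $\sigma$-separated from $Y$ given $Z$ in $G$ if and only if $X$ is $\sigma$-separated from $Y$ given $Z$ in the marginalization $G^{\mathrm{marg}\setminus W}$.
   Context: HEDG $G=(V,E,H)$: $V$ finite, $E\subseteq V\times V$ (self-loops allowed), $H$ a simplicial complex on $V$ (contains all singletons, closed under subsets); for distinct $v,w$, $v\leftrightarrow w$ means $\{v,w\}\in H$. $\mathrm{Anc}^G(v)$ ($\mathrm{Desc}^G(v)$): nodes with a directed path to (from) $v$, including $v$; $\mathrm{Sc}^G(v)=\mathrm{Anc}^G(v)\cap\mathrm{Desc}^G(v)$. Marginalization $G^{\mathrm{marg}\setminus W}=(V\setminus W,E',H')$: $v_1\to v_2\in E'$ iff $G$ has a directed path $v_1\to u_1\to\cdots\to u_r\to v_2$ with $r\ge0$, all $u_i\in W$; $F'\subseteq V\setminus W$ is in $H'$ iff there is $F\in H$ with $F\subseteq F'\cup W$ such that each $v\in F'$ either lies in $F\setminus W$ or there is a directed path $u_1\to\cdots\to u_r\to v$, $r\ge1$, all $u_i\in W$, $u_1\in F\cap W$. A path is a node sequence $v_1,\dots,v_n$ ($n\ge1$, repetitions allowed) with consecutive nodes joined by $\to$, $\leftarrow$ or $\leftrightarrow$. It is $Z$-$\sigma$-blocked if (a) $v_1\in Z$ or $v_n\in Z$; or (b) some intermediate $v_i$ is a collider (both adjacent edges have an arrowhead at $v_i$) with $v_i\notin\mathrm{Anc}^G(Z)$;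 or (c) some intermediate non-collider $v_i\in Z$ has, on the path, an outgoing directed edge $v_i\to v_{i+1}$ with $v_{i+1}\notin\mathrm{Sc}^G(v_i)$ or $v_{i-1}\leftarrow v_i$ with $v_{i-1}\notin\mathrm{Sc}^G(v_i)$. $X$ is $\sigma$-separated from $Y$ given $Z$ if every path with one endnode in $X$ and the other in $Y$ is $Z$-$\sigma$-blocked. *)

theory Defs
  imports Main
begin

definition simplicial_complex :: "'a set \<Rightarrow> 'a set set \<Rightarrow> bool" where
  "simplicial_complex V H \<longleftrightarrow>
     (\<forall>F\<in>H. F \<subseteq> V) \<and> (\<forall>v\<in>V. {v} \<in> H) \<and> (\<forall>F\<in>H. \<forall>F'. F' \<subseteq> F \<longrightarrow> F' \<in> H)"

definition hedg :: "'a set \<Rightarrow> ('a \<times> 'a) set \<Rightarrow> 'a set set \<Rightarrow> bool" where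
  "hedg V E H \<longleftrightarrow> finite V \<and> E \<subseteq> V \<times> V \<and> simplicial_complex V H"

definition anc :: "('a \<times> 'a) set \<Rightarrow> 'a \<Rightarrow> 'a set" where
  "anc E v = {u. (u, v) \<in> E\<^sup>*}"

definition desc :: "('a \<times> 'a) set \<Rightarrow> 'a \<Rightarrow> 'a set" where
  "desc E v = {u. (v, u) \<in> E\<^sup>*}"

definition sc :: "('a \<times> 'a) set \<Rightarrow> 'a \<Rightarrow> 'a set" where
  "sc E v = anc E v \<inter> desc E v"

definition anc_set :: "('a \<times> 'a) set \<Rightarrow> 'a set \<Rightarrow> 'a set" where
  "anc_set E Z = (\<Union>z\<in>Z. anc E z)"

text \<open>Directed path a \<rightarrow> u1 \<rightarrow> ... \<rightarrow> ur \<rightarrow> b with r \<ge> 0 and all ui in W.\<close>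
definition dpath_via :: "('a \<times> 'a) set \<Rightarrow> 'a set \<Rightarrow> 'a \<Rightarrow> 'a \<Rightarrow> bool" where
  "dpath_via E W a b \<longleftrightarrow> (a, b) \<in> {(x, y). (x, y) \<in> E \<and> y \<in> W}\<^sup>* O E"

definition marg_E :: "'a set \<Rightarrow> ('a \<times> 'a) set \<Rightarrow> 'a set \<Rightarrow> ('a \<times> 'a) set" where
  "marg_E V E W = {(a, b). a \<in> V - W \<and> b \<in> V - W \<and> dpath_via E W a b}"

definition marg_H :: "'a set \<Rightarrow> ('a \<times> 'a) set \<Rightarrow> 'a set set \<Rightarrow> 'a set \<Rightarrow> 'a set set" where
  "marg_H V E H W = {F'. F' \<subseteq> V - W \<and>
     (\<exists>F\<in>H. F \<subseteq> F' \<union> W \<and>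
        (\<forall>v\<in>F'. v \<in> F - W \<or> (\<exists>u\<in>F \<inter> W. dpath_via E W u v)))}"

text \<open>Edge kinds on a path: Fwd at position i means v_i \<rightarrow> v_(i+1),
  Bwd means v_i \<leftarrow> v_(i+1), Bi means v_i \<leftrightarrow> v_(i+1).\<close>
datatype edge_kind = Fwd | Bwd | Bi

definition edge_ok :: "('a \<times> 'a) set \<Rightarrow> 'a set set \<Rightarrow> 'a \<Rightarrow> edge_kind \<Rightarrow> 'a \<Rightarrow> bool" where
  "edge_ok E H a k b \<longleftrightarrow>
     (case k of Fwd \<Rightarrow> (a, b) \<in> E | Bwd \<Rightarrow> (b, a) \<in> E | Bi \<Rightarrow> a \<noteq> b \<and> {a, b} \<in> H)"

definition is_path :: "'a set \<Rightarrow> ('a \<times> 'a) set \<Rightarrow> 'a set set \<Rightarrow> 'a list \<Rightarrow> edge_kind list \<Rightarrow> bool" where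
  "is_path V E H vs es \<longleftrightarrow> vs \<noteq> [] \<and> set vs \<subseteq> V \<and> length es = length vs - 1 \<and>
     (\<forall>i < length es. edge_ok E H (vs ! i) (es ! i) (vs ! Suc i))"

text \<open>Arrowhead of edge es!(i-1) at node i, resp. of edge es!i at node i.\<close>
definition head_in :: "edge_kind \<Rightarrow> bool" where
  "head_in k \<longleftrightarrow> k = Fwd \<or> k = Bi"

definition head_out :: "edge_kind \<Rightarrow> bool" where
  "head_out k \<longleftrightarrow> k = Bwd \<or> k = Bi"

definition collider :: "edge_kind list \<Rightarrow> nat \<Rightarrow> bool" where
  "collider es i \<longleftrightarrow> head_in (es ! (i - 1)) \<and> head_out (es ! i)"

definition sigma_blocked :: "('a \<times> 'a) set \<Rightarrow> 'a set \<Rightarrow> 'a list \<Rightarrow> edge_kind list \<Rightarrow> bool" where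
  "sigma_blocked E Z vs es \<longleftrightarrow>
     hd vs \<in> Z \<or> last vs \<in> Z \<or>
     (\<exists>i. 0 < i \<and> i < length vs - 1 \<and> collider es i \<and> vs ! i \<notin> anc_set E Z) \<or>
     (\<exists>i. 0 < i \<and> i < length vs - 1 \<and> \<not> collider es i \<and> vs ! i \<in> Z \<and>
        ((es ! i = Fwd \<and> vs ! Suc i \<notin> sc E (vs ! i)) \<or>
         (es ! (i - 1) = Bwd \<and> vs ! (i - 1) \<notin> sc E (vs ! i))))"

definition sigma_sep :: "'a set \<Rightarrow> ('a \<times> 'a) set \<Rightarrow> 'a set set \<Rightarrow> 'a set \<Rightarrow> 'a set \<Rightarrow> 'a set \<Rightarrow> bool" where
  "sigma_sep V E H X Y Z \<longleftrightarrow>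
     (\<forall>vs es. is_path V E H vs es \<and>
        ((hd vs \<in> X \<and> last vs \<in> Y) \<or> (hd vs \<in> Y \<and> last vs \<in> X))
        \<longrightarrow> sigma_blocked E Z vs es)"

end

theory Submission
  imports Defs
begin


definition okL :: "('a \<times> 'a) set \<Rightarrow> 'a set \<Rightarrow> ('a \<times> edge_kind) option \<Rightarrow> 'a \<Rightarrow> bool \<Rightarrow> bool" where
 "okL E Z st v ho \<longleftrightarrow> (case st of None \<Rightarrow> True | Some (p,k) \<Rightarrow>
     (head_in k \<and> ho \<longrightarrow> v \<in> anc_set E Z) \<and> (v \<in> Z \<and> k = Bwd \<longrightarrow> p \<in> sc E v))"

definition okR :: "('a \<times> 'a) set \<Rightarrow> 'a set \<Rightarrow> 'a \<Rightarrow> edge_kind \<Rightarrow> 'a \<Rightarrow> bool" where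
 "okR E Z v k n \<longleftrightarrow> (v \<in> Z \<and> k = Fwd \<longrightarrow> n \<in> sc E v)"

inductive owalk :: "'a set \<Rightarrow> ('a\<times>'a) set \<Rightarrow> 'a set set \<Rightarrow> 'a set \<Rightarrow> 'a \<Rightarrow> ('a \<times> edge_kind) option \<Rightarrow> 'a \<Rightarrow> bool"
  for V E H Z x where
 base: "x \<in> V \<Longrightarrow> x \<notin> Z \<Longrightarrow> owalk V E H Z x None x"
| step: "owalk V E H Z x st v \<Longrightarrow> edge_ok E H v k n \<Longrightarrow> n \<in> V \<Longrightarrow> okL E Z st v (head_out k)
   \<Longrightarrow> okR E Z v k n \<Longrightarrow> owalk V E H Z x (Some (v,k)) n"

definition intok :: "('a \<times> 'a) set \<Rightarrow> 'a set \<Rightarrow> 'a list \<Rightarrow> edge_kind list \<Rightarrow> bool" where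
 "intok E Z vs es \<longleftrightarrow> (\<forall>i. 0 < i \<longrightarrow> i < length vs - 1 \<longrightarrow>
    okL E Z (Some (vs!(i-1), es!(i-1))) (vs!i) (head_out (es!i)) \<and> okR E Z (vs!i) (es!i) (vs!Suc i))"

lemma nb_iff: "(\<not> sigma_blocked E Z vs es) \<longleftrightarrow> hd vs \<notin> Z \<and> last vs \<notin> Z \<and> intok E Z vs es"
  unfolding sigma_blocked_def intok_def
proof (intro iffI conjI allI impI)
  fix i assume h: "\<not> (hd vs \<in> Z \<or> last vs \<in> Z \<or>
     (\<exists>i. 0 < i \<and> i < length vs - 1 \<and> collider es i \<and> vs ! i \<notin> anc_set E Z) \<or>
     (\<exists>i. 0 < i \<and> i < length vs - 1 \<and> \<not> collider es i \<and> vs ! i \<in> Z \<and>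
        ((es ! i = Fwd \<and> vs ! Suc i \<notin> sc E (vs ! i)) \<or>
         (es ! (i - 1) = Bwd \<and> vs ! (i - 1) \<notin> sc E (vs ! i)))))" and i: "0 < i" "i < length vs - 1"
  then show "okL E Z (Some (vs ! (i - 1), es ! (i - 1))) (vs ! i) (head_out (es ! i))"
    "okR E Z (vs ! i) (es ! i) (vs ! Suc i)"
    unfolding okL_def okR_def collider_def head_in_def head_out_def
    by (cases "es!i"; cases "es!(i-1)"; auto)+
qed (auto simp: okL_def okR_def collider_def head_in_def head_out_def split: edge_kind.splits)

lemma path_to_owalk:
  assumes P: "is_path V E H vs es" and hz: "hd vs \<notin> Z" and I: "intok E Z vs es"
  shows "\<forall>m. 1 \<le> m \<longrightarrow> m \<le> length vs \<longrightarrow>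
    owalk V E H Z (hd vs) (if m = 1 then None else Some (vs ! (m - 2), es ! (m - 2))) (vs ! (m - 1))"
proof
  fix m show "1 \<le> m \<longrightarrow> m \<le> length vs \<longrightarrow>
    owalk V E H Z (hd vs) (if m = 1 then None else Some (vs ! (m - 2), es ! (m - 2))) (vs ! (m - 1))"
  proof (induction m)
    case 0 then show ?case by simp
  next
    case (Suc m)
    have ne: "vs \<noteq> []" and sub: "set vs \<subseteq> V" and le: "length es = length vs - 1"
      and ed: "\<forall>i < length es. edge_ok E H (vs ! i) (es ! i) (vs ! Suc i)"
      using P unfolding is_path_def by auto
    show ?case
    proof (intro impI)
      assume a: "1 \<le> Suc m" "Suc m \<le> length vs"
      show "owalk V E H Z (hd vs) (if Suc m = 1 then None else Some (vs ! (Suc m - 2), es ! (Suc m - 2))) (vs ! (Suc m - 1))"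
      proof (cases "m = 0")
        case True
        then show ?thesis using ne sub hz by (auto simp: hd_conv_nth intro!: owalk.base)
      next
        case False
        then have IH: "owalk V E H Z (hd vs) (if m = 1 then None else Some (vs ! (m - 2), es ! (m - 2))) (vs ! (m - 1))"
          using Suc a by auto
        have e: "edge_ok E H (vs ! (m-1)) (es ! (m-1)) (vs ! m)" using ed le a False
          by (metis Suc_diff_1 Suc_le_lessD diff_less_mono less_one not_gr0 zero_less_diff le_less_Suc_eq le_neq_implies_less less_diff_conv2 less_imp_le_nat)
        have vm: "vs ! m \<in> V" using sub a by auto
        have oks: "okL E Z (if m = 1 then None else Some (vs ! (m - 2), es ! (m - 2))) (vs ! (m - 1)) (head_out (es ! (m-1)))
           \<and> okR E Z (vs ! (m - 1)) (es ! (m-1)) (vs ! m)"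
        proof (cases "m = 1")
          case True
          then show ?thesis using hz ne by (auto simp: okL_def okR_def hd_conv_nth)
        next
          case False
          then have "0 < m - 1" "m - 1 < length vs - 1" using \<open>m \<noteq> 0\<close> a by auto
          then have "okL E Z (Some (vs!(m-1-1), es!(m-1-1))) (vs!(m-1)) (head_out (es!(m-1))) \<and> okR E Z (vs!(m-1)) (es!(m-1)) (vs!Suc (m-1))"
            using I unfolding intok_def by blast
          moreover have "m - 1 - 1 = m - 2" "Suc (m-1) = m" using \<open>m \<noteq> 0\<close> by auto
          ultimately show ?thesis using False by simp
        qed
        show ?thesis using owalk.step[OF IH e vm] oks False by simp
      qed
    qed
  qed
qed

lemma owalk_to_path:
  assumes "owalk V E H Z x st v"
  shows "\<exists>vs es. is_path V E H vs es \<and> hd vs = x \<and> last vs = v \<and> x \<notin> Z \<and> intok E Z vs es \<and>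
    (case st of None \<Rightarrow> vs = [x] \<and> es = [] | Some (p,k) \<Rightarrow> length vs \<ge> 2 \<and> vs!(length vs - 2) = p \<and> es!(length vs - 2) = k)"
  using assms
proof (induction rule: owalk.induct)
  case base
  then show ?case by (auto simp: is_path_def intok_def)
next
  case (step st v k n)
  then obtain vs es where P: "is_path V E H vs es" and h: "hd vs = x" "last vs = v" "x \<notin> Z"
    and I: "intok E Z vs es" and C: "(case st of None \<Rightarrow> vs = [x] \<and> es = [] | Some (p,k) \<Rightarrow> length vs \<ge> 2 \<and> vs!(length vs - 2) = p \<and> es!(length vs - 2) = k)"
    by blast
  have ne: "vs \<noteq> []" and sub: "set vs \<subseteq> V" and le: "length es = length vs - 1"
    and ed: "\<forall>i < length es. edge_ok E H (vs ! i) (es ! i) (vs ! Suc i)"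
    using P unfolding is_path_def by auto
  define vs' where "vs' = vs @ [n]"
  define es' where "es' = es @ [k]"
  have lv: "length vs' = Suc (length vs)" "length es' = length vs" using le ne by (auto simp: vs'_def es'_def)
  have lastv: "vs ! (length vs - 1) = v" using h ne by (simp add: last_conv_nth)
  have P': "is_path V E H vs' es'"
    unfolding is_path_def
  proof (intro conjI allI impI)
    show "vs' \<noteq> []" "set vs' \<subseteq> V" "length es' = length vs' - 1" using sub step lv by (auto simp: vs'_def)
    fix i assume "i < length es'"
    show "edge_ok E H (vs' ! i) (es' ! i) (vs' ! Suc i)"
    proof (cases "i < length es")
      case True then show ?thesis using ed le by (auto simp: vs'_def es'_def nth_append)
    next
      case False
      then have "i = length es" using \<open>i < length es'\<close> lv le by auto
      then show ?thesis using step(2) le ne lastv by (auto simp: vs'_def es'_def nth_append)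
    qed
  qed
  have I': "intok E Z vs' es'"
    unfolding intok_def
  proof (intro allI impI)
    fix i assume i: "0 < i" "i < length vs' - 1"
    show "okL E Z (Some (vs' ! (i - 1), es' ! (i - 1))) (vs' ! i) (head_out (es' ! i)) \<and> okR E Z (vs' ! i) (es' ! i) (vs' ! Suc i)"
    proof (cases "i < length vs - 1")
      case True
      then show ?thesis using I i le unfolding intok_def by (auto simp: vs'_def es'_def nth_append)
    next
      case False
      then have ii: "i = length vs - 1" using i lv by auto
      then have "length vs \<ge> 2" using i by auto
      then obtain p k0 where st: "st = Some (p,k0)" and "vs!(length vs - 2) = p" "es!(length vs - 2) = k0"
        using C ne by (cases st) auto
      moreover have "i - 1 = length vs - 2" using ii by auto
      ultimately show ?thesis using step(4,5) ii le lastv \<open>length vs \<ge> 2\<close>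
        by (auto simp: vs'_def es'_def nth_append)
    qed
  qed
  show ?case
    apply (rule exI[of _ vs'], rule exI[of _ es'])
    using P' I' h ne le lastv lv by (auto simp: vs'_def es'_def nth_append Suc_le_eq)
qed

lemma sep_iff_owalk:
  "sigma_sep V E H X Y Z \<longleftrightarrow>
   (\<forall>x y. (x \<in> X \<and> y \<in> Y \<or> x \<in> Y \<and> y \<in> X) \<longrightarrow> \<not> (\<exists>st. owalk V E H Z x st y \<and> y \<notin> Z))"
proof
  assume S: "sigma_sep V E H X Y Z"
  show "\<forall>x y. (x \<in> X \<and> y \<in> Y \<or> x \<in> Y \<and> y \<in> X) \<longrightarrow> \<not> (\<exists>st. owalk V E H Z x st y \<and> y \<notin> Z)"
  proof (intro allI impI notI)
    fix x y assume xy: "x \<in> X \<and> y \<in> Y \<or> x \<in> Y \<and> y \<in> X" and "\<exists>st. owalk V E H Z x st y \<and> y \<notin> Z"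
    then obtain st where o: "owalk V E H Z x st y" and "y \<notin> Z" by blast
    from owalk_to_path[OF o] obtain vs es where "is_path V E H vs es" "hd vs = x" "last vs = y" "x \<notin> Z" "intok E Z vs es"
      by blast
    then show False using S xy \<open>y \<notin> Z\<close> nb_iff[of E Z vs es] unfolding sigma_sep_def by blast
  qed
next
  assume N: "\<forall>x y. (x \<in> X \<and> y \<in> Y \<or> x \<in> Y \<and> y \<in> X) \<longrightarrow> \<not> (\<exists>st. owalk V E H Z x st y \<and> y \<notin> Z)"
  show "sigma_sep V E H X Y Z" unfolding sigma_sep_def
  proof (intro allI impI)
    fix vs es assume a: "is_path V E H vs es \<and> (hd vs \<in> X \<and> last vs \<in> Y \<or> hd vs \<in> Y \<and> last vs \<in> X)"
    show "sigma_blocked E Z vs es"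
    proof (rule ccontr)
      assume "\<not> sigma_blocked E Z vs es"
      then have nb: "hd vs \<notin> Z" "last vs \<notin> Z" "intok E Z vs es" using nb_iff by blast+
      have ne: "vs \<noteq> []" using a by (auto simp: is_path_def)
      have "owalk V E H Z (hd vs) (if length vs = 1 then None else Some (vs ! (length vs - 2), es ! (length vs - 2))) (vs ! (length vs - 1))"
        using path_to_owalk[OF _ nb(1,3), of V H] a ne by (simp add: Suc_leI)
      then have "owalk V E H Z (hd vs) (if length vs = 1 then None else Some (vs ! (length vs - 2), es ! (length vs - 2))) (last vs)"
        using ne by (simp add: last_conv_nth)
      then show False using N a nb by blast
    qed
  qed
qed




lemma owalk_nodes: "owalk V E H Z x st v \<Longrightarrow> v \<in> V \<and> (\<forall>p k. st = Some (p,k) \<longrightarrow> p \<in> V)"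
  by (induction rule: owalk.induct) auto

lemma okL_mono: "okL E Z st v True \<Longrightarrow> okL E Z st v ho"
  by (auto simp: okL_def split: option.splits)

lemma okL_False: "v \<notin> Z \<Longrightarrow> okL E Z st v False"
  by (auto simp: okL_def split: option.splits)

locale mg =
  fixes V :: "'a set" and E H W Z
  assumes hg: "hedg V E H" and WV: "W \<subseteq> V" and ZV: "Z \<subseteq> V" and ZW: "Z \<inter> W = {}"
begin

abbreviation "M \<equiv> marg_E V E W"
abbreviation "HM \<equiv> marg_H V E H W"
abbreviation "R \<equiv> {(x,y). (x,y) \<in> E \<and> y \<in> W}"

lemma EV: "(a,b) \<in> E \<Longrightarrow> a \<in> V \<and> b \<in> V"
  using hg unfolding hedg_def by auto

lemma HV: "F \<in> H \<Longrightarrow> F \<subseteq> V"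
  using hg unfolding hedg_def simplicial_complex_def by auto

lemma Hsing: "v \<in> V \<Longrightarrow> {v} \<in> H"
  using hg unfolding hedg_def simplicial_complex_def by auto

lemma Hsub: "F \<in> H \<Longrightarrow> F' \<subseteq> F \<Longrightarrow> F' \<in> H"
  using hg unfolding hedg_def simplicial_complex_def by blast

lemma RE: "R\<^sup>* \<subseteq> E\<^sup>*"
  by (rule rtrancl_mono) auto

lemma dp_E: "dpath_via E W a b \<Longrightarrow> (a,b) \<in> E\<^sup>+"
proof -
  assume "dpath_via E W a b"
  then obtain m where "(a,m) \<in> R\<^sup>*" "(m,b) \<in> E" unfolding dpath_via_def by blast
  then have "(a,m) \<in> E\<^sup>*" using RE by blast
  then show ?thesis using \<open>(m,b) \<in> E\<close> by (simp add: rtrancl_into_trancl1)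
qed

lemma dp_Es: "dpath_via E W a b \<Longrightarrow> (a,b) \<in> E\<^sup>*"
  using dp_E by (meson trancl_into_rtrancl)

lemma dp_edge: "(a,b) \<in> E \<Longrightarrow> dpath_via E W a b"
  unfolding dpath_via_def by blast

lemma dp_R: "dpath_via E W a b \<Longrightarrow> b \<in> W \<Longrightarrow> (a,b) \<in> R\<^sup>*"
proof -
  assume "dpath_via E W a b" "b \<in> W"
  then obtain m where "(a,m) \<in> R\<^sup>*" "(m,b) \<in> E" unfolding dpath_via_def by blast
  then show ?thesis using \<open>b \<in> W\<close> by (simp add: rtrancl_into_rtrancl)
qed

lemma dp_trans: "dpath_via E W a b \<Longrightarrow> b \<in> W \<Longrightarrow> dpath_via E W b c \<Longrightarrow> dpath_via E W a c"
proof -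
  assume a: "dpath_via E W a b" "b \<in> W" "dpath_via E W b c"
  then have "(a,b) \<in> R\<^sup>*" using dp_R by blast
  moreover obtain m where "(b,m) \<in> R\<^sup>*" "(m,c) \<in> E" using a(3) unfolding dpath_via_def by blast
  ultimately show ?thesis unfolding dpath_via_def
    by (meson relcomp.relcompI rtrancl_trans)
qed

lemma dp_V: "dpath_via E W a b \<Longrightarrow> a \<in> V \<and> b \<in> V"
proof -
  assume "dpath_via E W a b"
  then have "(a,b) \<in> E\<^sup>+" by (rule dp_E)
  then show ?thesis
    by (metis EV tranclD tranclD2)
qed

lemma dp_cases: "dpath_via E W a b \<Longrightarrow> (a,b) \<in> E \<or> (\<exists>u. (a,u) \<in> E \<and> u \<in> W \<and> dpath_via E W u b)"
proof -
  assume "dpath_via E W a b"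
  then obtain m where m: "(a,m) \<in> R\<^sup>*" "(m,b) \<in> E" unfolding dpath_via_def by blast
  from m(1) show ?thesis
  proof (rule converse_rtranclE)
    assume "a = m" then show ?thesis using m by simp
  next
    fix u assume "(a,u) \<in> R" "(u,m) \<in> R\<^sup>*"
    then show ?thesis using m unfolding dpath_via_def by blast
  qed
qed

lemma first_exit: "(w,t) \<in> E\<^sup>* \<Longrightarrow> w \<in> W \<Longrightarrow> t \<notin> W \<Longrightarrow> \<exists>c. c \<notin> W \<and> dpath_via E W w c \<and> (c,t) \<in> E\<^sup>*"
proof (induction rule: converse_rtrancl_induct)
  case base then show ?case by simp
next
  case (step y z)
  show ?case
  proof (cases "z \<in> W")
    case True
    then obtain c where "c \<notin> W" "dpath_via E W z c" "(c,t) \<in> E\<^sup>*" using step by blast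
    then show ?thesis using dp_trans[OF dp_edge[OF step(1)] True] by blast
  next
    case False
    then show ?thesis using step dp_edge by blast
  qed
qed

lemma dp_M: "a \<in> V - W \<Longrightarrow> b \<in> V - W \<Longrightarrow> dpath_via E W a b \<Longrightarrow> (a,b) \<in> M"
  unfolding marg_E_def by auto

lemma M_dp: "(a,b) \<in> M \<Longrightarrow> dpath_via E W a b \<and> a \<in> V - W \<and> b \<in> V - W"
  unfolding marg_E_def by auto

lemma rt_M1: "(a,b) \<in> M\<^sup>* \<Longrightarrow> (a,b) \<in> E\<^sup>*"
proof (induction rule: rtrancl_induct)
  case base then show ?case by simp
next
  case (step y z)
  have "(y,z) \<in> E\<^sup>*" using M_dp[OF step(2)] dp_Es by blast
  then show ?case by (rule rtrancl_trans[OF step(3)])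
qed

lemma rt_M2:
  assumes "(a,b) \<in> E\<^sup>*" "a \<in> V - W"
  shows "\<exists>c. c \<in> V - W \<and> (a,c) \<in> M\<^sup>* \<and> (c,b) \<in> R\<^sup>* \<and> (b \<notin> W \<longrightarrow> c = b)"
  using assms(1)
proof (induction rule: rtrancl_induct)
  case base then show ?case using assms(2) by blast
next
  case (step b b')
  then obtain c where c: "c \<in> V - W" "(a,c) \<in> M\<^sup>*" "(c,b) \<in> R\<^sup>*" "b \<notin> W \<longrightarrow> c = b" by blast
  show ?case
  proof (cases "b' \<in> W")
    case True
    then have "(c,b') \<in> R\<^sup>*" using c step by (simp add: rtrancl_into_rtrancl)
    then show ?thesis using c True by blast
  next
    case False
    have "dpath_via E W c b'" using c step unfolding dpath_via_def by blast
    moreover have "b' \<in> V" using EV step by blast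
    ultimately have "(c,b') \<in> M" using c False dp_M by blast
    have "(a,b') \<in> M\<^sup>*" using c(2) \<open>(c,b') \<in> M\<close> by (rule rtrancl_into_rtrancl)
    then show ?thesis using False \<open>b' \<in> V\<close> by blast
  qed
qed

lemma rt_M: "a \<in> V - W \<Longrightarrow> b \<in> V - W \<Longrightarrow> (a,b) \<in> M\<^sup>* \<longleftrightarrow> (a,b) \<in> E\<^sup>*"
  using rt_M1 rt_M2 by blast

lemma sc_M: "u \<in> V - W \<Longrightarrow> v \<in> V - W \<Longrightarrow> u \<in> sc M v \<longleftrightarrow> u \<in> sc E v"
  unfolding sc_def anc_def desc_def using rt_M by auto

lemma anc_M: "v \<in> V - W \<Longrightarrow> v \<in> anc_set M Z \<longleftrightarrow> v \<in> anc_set E Z"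
proof -
  assume v: "v \<in> V - W"
  have "\<And>z. z \<in> Z \<Longrightarrow> z \<in> V - W" using ZV ZW by auto
  then show ?thesis unfolding anc_set_def anc_def using rt_M[OF v] by blast
qed

lemma okL_M: "v \<in> V - W \<Longrightarrow> (\<forall>p k. st = Some (p,k) \<longrightarrow> p \<in> V - W) \<Longrightarrow> okL M Z st v ho = okL E Z st v ho"
  unfolding okL_def using sc_M anc_M by (auto split: option.splits)

lemma okR_M: "v \<in> V - W \<Longrightarrow> n \<in> V - W \<Longrightarrow> okR M Z v k n = okR E Z v k n"
  unfolding okR_def using sc_M by auto

lemma mstep:
  assumes "owalk (V - W) M HM Z x st c" "edge_ok M HM c k n" "n \<in> V - W"
    "okL E Z st c (head_out k)" "okR E Z c k n"
  shows "owalk (V - W) M HM Z x (Some (c,k)) n"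
proof -
  have "c \<in> V - W" "\<forall>p k. st = Some (p,k) \<longrightarrow> p \<in> V - W" using owalk_nodes[OF assms(1)] by auto
  moreover have "n \<in> V - W" by (rule assms(3))
  ultimately have "okL M Z st c (head_out k)" "okR M Z c k n" using assms(4,5) okL_M okR_M by auto
  then show ?thesis using owalk.step[OF assms(1,2,3)] by blast
qed

lemma eM_Fwd: "c \<in> V - W \<Longrightarrow> n \<in> V - W \<Longrightarrow> dpath_via E W c n \<Longrightarrow> edge_ok M HM c Fwd n"
  unfolding edge_ok_def using dp_M by auto

lemma eM_Bwd: "c \<in> V - W \<Longrightarrow> n \<in> V - W \<Longrightarrow> dpath_via E W n c \<Longrightarrow> edge_ok M HM c Bwd n"
  unfolding edge_ok_def using dp_M by auto

lemma eM_Bi: "c \<noteq> n \<Longrightarrow> {c,n} \<in> HM \<Longrightarrow> edge_ok M HM c Bi n"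
  unfolding edge_ok_def by auto

definition conf :: "'a \<Rightarrow> 'a \<Rightarrow> bool" where
  "conf c w \<longleftrightarrow> (\<exists>F\<in>H. F \<subseteq> {c} \<union> W \<and> (c \<in> F \<or> (\<exists>u\<in>F \<inter> W. dpath_via E W u c))
      \<and> (w \<in> F \<or> (\<exists>u\<in>F \<inter> W. dpath_via E W u w)))"

lemma conf_ext: "conf c w \<Longrightarrow> w \<in> W \<Longrightarrow> dpath_via E W w t \<Longrightarrow> t \<in> W \<Longrightarrow> conf c t"
proof -
  assume a: "conf c w" "w \<in> W" "dpath_via E W w t" "t \<in> W"
  then obtain F where F: "F \<in> H" "F \<subseteq> {c} \<union> W" "c \<in> F \<or> (\<exists>u\<in>F \<inter> W. dpath_via E W u c)"
      "w \<in> F \<or> (\<exists>u\<in>F \<inter> W. dpath_via E W u w)" unfolding conf_def by blast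
  have "\<exists>u\<in>F \<inter> W. dpath_via E W u t" using F(4) a(2,3) dp_trans by blast
  then show ?thesis unfolding conf_def using F by blast
qed

lemma conf_HM: "conf c w \<Longrightarrow> w \<in> W \<Longrightarrow> dpath_via E W w t \<Longrightarrow> t \<in> V - W \<Longrightarrow> c \<in> V - W \<Longrightarrow> {c,t} \<in> HM"
proof -
  assume a: "conf c w" "w \<in> W" "dpath_via E W w t" "t \<in> V - W" "c \<in> V - W"
  then obtain F where F: "F \<in> H" "F \<subseteq> {c} \<union> W" "c \<in> F \<or> (\<exists>u\<in>F \<inter> W. dpath_via E W u c)"
      "w \<in> F \<or> (\<exists>u\<in>F \<inter> W. dpath_via E W u w)" unfolding conf_def by blast
  have "\<exists>u\<in>F \<inter> W. dpath_via E W u t" using F(4) a(2,3) dp_trans by blast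
  moreover have "F \<subseteq> {c,t} \<union> W" using F(2) by auto
  moreover have "c \<in> F - W \<or> (\<exists>u\<in>F \<inter> W. dpath_via E W u c)" using F(3) a(5) by blast
  moreover have "{c,t} \<subseteq> V - W" using a by auto
  ultimately have "{c,t} \<subseteq> V - W \<and> (\<exists>F\<in>H. F \<subseteq> {c,t} \<union> W \<and> (\<forall>v\<in>{c,t}. v \<in> F - W \<or> (\<exists>u\<in>F \<inter> W. dpath_via E W u v)))"
    using F(1) by blast
  then show ?thesis unfolding marg_H_def by blast
qed

lemma D_conf: "dpath_via E W w c \<Longrightarrow> w \<in> W \<Longrightarrow> conf c w"
  unfolding conf_def using Hsing WV by (intro bexI[of _ "{w}"]) auto

lemma bi_conf: "dpath_via E W w c \<Longrightarrow> w \<in> W \<Longrightarrow> {w,n} \<in> H \<Longrightarrow> n \<in> W \<Longrightarrow> conf c n"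
proof -
  assume a: "dpath_via E W w c" "w \<in> W" "{w,n} \<in> H" "n \<in> W"
  have "{w,n} \<subseteq> {c} \<union> W" "\<exists>u\<in>{w,n} \<inter> W. dpath_via E W u c" "n \<in> {w,n}" using a by auto
  then show ?thesis unfolding conf_def using a(3) by blast
qed

lemma bi_HM: "dpath_via E W w c \<Longrightarrow> w \<in> W \<Longrightarrow> {w,n} \<in> H \<Longrightarrow> n \<in> V - W \<Longrightarrow> c \<in> V - W \<Longrightarrow> {c,n} \<in> HM"
proof -
  assume a: "dpath_via E W w c" "w \<in> W" "{w,n} \<in> H" "n \<in> V - W" "c \<in> V - W"
  have "{w,n} \<subseteq> {c,n} \<union> W" "\<forall>v\<in>{c,n}. v \<in> {w,n} - W \<or> (\<exists>u\<in>{w,n} \<inter> W. dpath_via E W u v)"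
    "{c,n} \<subseteq> V - W" using a by auto
  then show ?thesis unfolding marg_H_def using a(3) by blast
qed

lemma start_conf: "{v,n} \<in> H \<Longrightarrow> n \<in> W \<Longrightarrow> conf v n"
proof -
  assume a: "{v,n} \<in> H" "n \<in> W"
  have "{v,n} \<subseteq> {v} \<union> W" "v \<in> {v,n}" "n \<in> {v,n}" using a by auto
  then show ?thesis unfolding conf_def using a(1) by blast
qed

lemma direct_HM: "{v,n} \<in> H \<Longrightarrow> v \<in> V - W \<Longrightarrow> n \<in> V - W \<Longrightarrow> {v,n} \<in> HM"
proof -
  assume a: "{v,n} \<in> H" "v \<in> V - W" "n \<in> V - W"
  have "{v,n} \<subseteq> {v,n} \<union> W" "\<forall>u\<in>{v,n}. u \<in> {v,n} - W \<or> (\<exists>u'\<in>{v,n} \<inter> W. dpath_via E W u' u)"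
    "{v,n} \<subseteq> V - W" using a by auto
  then show ?thesis unfolding marg_H_def using a(1) by blast
qed

end



definition markhead :: "('a \<times> edge_kind) option \<Rightarrow> bool" where
  "markhead st = (case st of None \<Rightarrow> False | Some (p,k) \<Rightarrow> head_in k)"

lemma okR_triv: "k \<noteq> Fwd \<Longrightarrow> okR E Z v k n"
  by (simp add: okR_def)

lemma okR_nZ: "v \<notin> Z \<Longrightarrow> okR E Z v k n"
  by (simp add: okR_def)

context mg
begin

abbreviation "OM x st c \<equiv> owalk (V - W) M HM Z x st c"

definition FW :: "'a \<Rightarrow> ('a \<times> edge_kind) option \<Rightarrow> 'a \<Rightarrow> bool" where
 "FW x st v \<longleftrightarrow> (v \<notin> W \<longrightarrow> (\<exists>st'. OM x st' v \<and> (\<forall>ho. okL E Z st v ho \<longrightarrow> okL E Z st' v ho)))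
   \<and> (v \<in> W \<longrightarrow> (\<exists>c st'. c \<in> V - W \<and> OM x st' c \<and>
        ((markhead st \<and> ((okL E Z st' c False \<and> c \<notin> Z \<and> dpath_via E W c v) \<or> (okL E Z st' c True \<and> conf c v)))
         \<or> (okL E Z st' c True \<and> dpath_via E W v c))))"

lemma FW_nW: "n \<notin> W \<Longrightarrow> OM x st' n \<Longrightarrow> (\<forall>ho. okL E Z st n ho \<longrightarrow> okL E Z st' n ho) \<Longrightarrow> FW x st n"
  unfolding FW_def by blast

lemma FW_A: "n \<in> W \<Longrightarrow> markhead st \<Longrightarrow> c \<in> V - W \<Longrightarrow> OM x st' c \<Longrightarrow> okL E Z st' c False \<Longrightarrow> c \<notin> Z
   \<Longrightarrow> dpath_via E W c n \<Longrightarrow> FW x st n"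
  unfolding FW_def by blast

lemma FW_C: "n \<in> W \<Longrightarrow> markhead st \<Longrightarrow> c \<in> V - W \<Longrightarrow> OM x st' c \<Longrightarrow> okL E Z st' c True
   \<Longrightarrow> conf c n \<Longrightarrow> FW x st n"
  unfolding FW_def by blast

lemma FW_D: "n \<in> W \<Longrightarrow> c \<in> V - W \<Longrightarrow> OM x st' c \<Longrightarrow> okL E Z st' c True
   \<Longrightarrow> dpath_via E W n c \<Longrightarrow> FW x st n"
  unfolding FW_def by blast

lemma D_step:
  assumes c: "c \<in> V - W" and o: "OM x st' c" and ok: "okL E Z st' c True"
    and dp: "dpath_via E W v c" and vW: "v \<in> W" and e: "edge_ok E H v k n" and nV: "n \<in> V"
  shows "FW x (Some (v,k)) n"
proof (cases "k = Bwd")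
  case False
  then have hk: "head_in k" "markhead (Some (v,k))" by (cases k; simp add: head_in_def markhead_def)+
  have cf: "conf c v" using D_conf[OF dp vW] .
  have more: "(n \<in> W \<longrightarrow> conf c n) \<and> (n \<in> V - W \<longrightarrow> c \<noteq> n \<longrightarrow> {c,n} \<in> HM)"
  proof (cases k)
    case Fwd
    then have vn: "(v,n) \<in> E" using e by (simp add: edge_ok_def)
    show ?thesis using conf_ext[OF cf vW dp_edge[OF vn]] conf_HM[OF cf vW dp_edge[OF vn] _ c] by blast
  next
    case Bi
    then have "{v,n} \<in> H" using e by (simp add: edge_ok_def)
    then show ?thesis using bi_conf[OF dp vW] bi_HM[OF dp vW _ _ c] by blast
  next
    case Bwd then show ?thesis using False by simp
  qed
  show ?thesis
  proof (cases "n \<in> W")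
    case True
    then show ?thesis using FW_C[OF True hk(2) c o ok] more by blast
  next
    case nW: False
    then have nW': "n \<in> V - W" using nV by auto
    show ?thesis
    proof (cases "c = n")
      case True
      have "\<forall>ho. okL E Z (Some(v,k)) n ho \<longrightarrow> okL E Z st' n ho" using okL_mono[OF ok] True by blast
      then show ?thesis using FW_nW[OF nW] o True by blast
    next
      case cn: False
      have eB: "edge_ok M HM c Bi n" using eM_Bi[OF cn] more nW' cn by blast
      have o2: "OM x (Some(c,Bi)) n" by (rule mstep[OF o eB nW']) (simp_all add: head_out_def ok okR_def)
      have "\<forall>ho. okL E Z (Some(v,k)) n ho \<longrightarrow> okL E Z (Some(c,Bi)) n ho" using hk False
        by (simp add: okL_def head_in_def)
      then show ?thesis using FW_nW[OF nW o2] by blast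
    qed
  qed
next
  case True
  then have nv: "(n,v) \<in> E" using e by (simp add: edge_ok_def)
  have dnc: "dpath_via E W n c" using dp_trans[OF dp_edge[OF nv] vW dp] .
  show ?thesis
  proof (cases "n \<in> W")
    case nW: True
    then show ?thesis using FW_D[OF nW c o ok dnc] by blast
  next
    case nW: False
    then have nW': "n \<in> V - W" using nV by auto
    have eb: "edge_ok M HM c Bwd n" using eM_Bwd[OF c nW' dnc] .
    have o1: "OM x (Some(c,Bwd)) n" by (rule mstep[OF o eb nW']) (simp_all add: head_out_def ok okR_def)
    show ?thesis
    proof (cases "n \<in> Z \<and> v \<in> sc E n")
      case False
      have "\<forall>ho. okL E Z (Some(v,k)) n ho \<longrightarrow> okL E Z (Some(c,Bwd)) n ho" using False True
        by (simp add: okL_def head_in_def)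
      then show ?thesis using FW_nW[OF nW o1] by blast
    next
      case nZ: True
      then have "(v,n) \<in> E\<^sup>*" unfolding sc_def anc_def by auto
      then obtain c'' where c'': "c'' \<notin> W" "dpath_via E W v c''" "(c'',n) \<in> E\<^sup>*"
        using first_exit vW nW by blast
      have c''V: "c'' \<in> V - W" using c'' dp_V by blast
      have dnc'': "dpath_via E W n c''" using dp_trans[OF dp_edge[OF nv] vW c''(2)] .
      have c''sc: "c'' \<in> sc E n" using c''(3) dp_Es[OF dnc''] unfolding sc_def anc_def desc_def by auto
      show ?thesis
      proof (cases "c'' = c")
        case True
        have "\<forall>ho. okL E Z (Some(v,k)) n ho \<longrightarrow> okL E Z (Some(c,Bwd)) n ho" using c''sc True
          by (simp add: okL_def head_in_def)
        then show ?thesis using FW_nW[OF nW o1] by blast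
      next
        case False
        have "{c,c''} \<in> HM" using conf_HM[OF D_conf[OF dp vW] vW c''(2) c''V c] .
        then have eB: "edge_ok M HM c Bi c''" using eM_Bi False by metis
        have o2: "OM x (Some(c,Bi)) c''" by (rule mstep[OF o eB c''V]) (simp_all add: head_out_def ok okR_def)
        have anc'': "c'' \<in> anc_set E Z" using nZ c''(3) unfolding anc_set_def anc_def by blast
        have o3: "OM x (Some(c'',Bwd)) n"
          by (rule mstep[OF o2 eM_Bwd[OF c''V nW' dnc''] nW']) (simp_all add: head_out_def okL_def head_in_def anc'' okR_def)
        have "\<forall>ho. okL E Z (Some(v,k)) n ho \<longrightarrow> okL E Z (Some(c'',Bwd)) n ho" using c''sc True
          by (simp add: okL_def head_in_def)
        then show ?thesis using FW_nW[OF nW o3] by blast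
      qed
    qed
  qed
qed


lemma coll_exit: "v \<in> W \<Longrightarrow> v \<in> anc_set E Z \<Longrightarrow> \<exists>c'. c' \<in> V - W \<and> dpath_via E W v c' \<and> c' \<in> anc_set E Z"
proof -
  assume vW: "v \<in> W" and "v \<in> anc_set E Z"
  then obtain z where z: "z \<in> Z" "(v,z) \<in> E\<^sup>*" unfolding anc_set_def anc_def by blast
  then have "z \<notin> W" using ZW by blast
  then obtain c' where c': "c' \<notin> W" "dpath_via E W v c'" "(c',z) \<in> E\<^sup>*" using first_exit z vW by blast
  then have "c' \<in> V - W" "c' \<in> anc_set E Z" using dp_V z unfolding anc_set_def anc_def by blast+
  then show ?thesis using c' by blast
qed

lemma markhead_anc: "markhead st \<Longrightarrow> okL E Z st v True \<Longrightarrow> v \<in> anc_set E Z"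
  by (auto simp: markhead_def okL_def split: option.splits)

lemma A_step:
  assumes c: "c \<in> V - W" and o: "OM x st' c" and ok: "okL E Z st' c False" and cZ: "c \<notin> Z"
    and dp: "dpath_via E W c v" and vW: "v \<in> W" and e: "edge_ok E H v k n" and nV: "n \<in> V"
    and col: "head_out k \<longrightarrow> v \<in> anc_set E Z"
  shows "FW x (Some (v,k)) n"
proof (cases "k = Fwd")
  case True
  then have vn: "(v,n) \<in> E" using e by (simp add: edge_ok_def)
  have dcn: "dpath_via E W c n" using dp_trans[OF dp vW dp_edge[OF vn]] .
  show ?thesis
  proof (cases "n \<in> W")
    case nW: True
    have "markhead (Some (v,k))" using True by (simp add: markhead_def head_in_def)
    then show ?thesis using FW_A[OF nW _ c o ok cZ dcn] by blast
  next
    case nW: False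
    then have nW': "n \<in> V - W" using nV by auto
    have o1: "OM x (Some(c,Fwd)) n" by (rule mstep[OF o eM_Fwd[OF c nW' dcn] nW']) (simp_all add: head_out_def ok okR_def cZ)
    have "\<forall>ho. okL E Z (Some(v,k)) n ho \<longrightarrow> okL E Z (Some(c,Fwd)) n ho" using True
      by (simp add: okL_def head_in_def)
    then show ?thesis using FW_nW[OF nW o1] by blast
  qed
next
  case False
  then have "head_out k" by (cases k) (auto simp: head_out_def)
  then have "v \<in> anc_set E Z" using col by blast
  then obtain c' where c': "c' \<in> V - W" "dpath_via E W v c'" "c' \<in> anc_set E Z" using coll_exit vW by blast
  have dcc: "dpath_via E W c c'" using dp_trans[OF dp vW c'(2)] .
  have o1: "OM x (Some(c,Fwd)) c'" by (rule mstep[OF o eM_Fwd[OF c c'(1) dcc] c'(1)]) (simp_all add: head_out_def ok okR_def cZ)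
  have "okL E Z (Some(c,Fwd)) c' True" using c'(3) by (simp add: okL_def)
  then show ?thesis using D_step[OF c'(1) o1 _ c'(2) vW e nV] by blast
qed

lemma C_step:
  assumes c: "c \<in> V - W" and o: "OM x st' c" and ok: "okL E Z st' c True" and cf: "conf c v"
    and vW: "v \<in> W" and e: "edge_ok E H v k n" and nV: "n \<in> V"
    and col: "head_out k \<longrightarrow> v \<in> anc_set E Z"
  shows "FW x (Some (v,k)) n"
proof (cases "k = Fwd")
  case True
  then have vn: "(v,n) \<in> E" using e by (simp add: edge_ok_def)
  show ?thesis
  proof (cases "n \<in> W")
    case nW: True
    have "markhead (Some (v,k))" using True by (simp add: markhead_def head_in_def)
    then show ?thesis using FW_C[OF nW _ c o ok conf_ext[OF cf vW dp_edge[OF vn] nW]] by blast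
  next
    case nW: False
    then have nW': "n \<in> V - W" using nV by auto
    show ?thesis
    proof (cases "c = n")
      case cn: True
      have "\<forall>ho. okL E Z (Some(v,k)) n ho \<longrightarrow> okL E Z st' n ho" using okL_mono[OF ok] cn by blast
      then show ?thesis using FW_nW[OF nW] o cn by blast
    next
      case cn: False
      have eB: "edge_ok M HM c Bi n" using eM_Bi[OF cn conf_HM[OF cf vW dp_edge[OF vn] nW' c]] .
      have o2: "OM x (Some(c,Bi)) n" by (rule mstep[OF o eB nW']) (simp_all add: head_out_def ok okR_def)
      have "\<forall>ho. okL E Z (Some(v,k)) n ho \<longrightarrow> okL E Z (Some(c,Bi)) n ho" using True
        by (simp add: okL_def head_in_def)
      then show ?thesis using FW_nW[OF nW o2] by blast
    qed
  qed
next
  case False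
  then have "head_out k" by (cases k) (auto simp: head_out_def)
  then have "v \<in> anc_set E Z" using col by blast
  then obtain c' where c': "c' \<in> V - W" "dpath_via E W v c'" "c' \<in> anc_set E Z" using coll_exit vW by blast
  show ?thesis
  proof (cases "c' = c")
    case True
    then show ?thesis using D_step[OF c o ok _ vW e nV] c'(2) by blast
  next
    case cc: False
    have eB: "edge_ok M HM c Bi c'" using eM_Bi[of c c'] cc conf_HM[OF cf vW c'(2) c'(1) c] by metis
    have o2: "OM x (Some(c,Bi)) c'" by (rule mstep[OF o eB c'(1)]) (simp_all add: head_out_def ok okR_def)
    have "okL E Z (Some(c,Bi)) c' True" using c'(3) by (simp add: okL_def head_in_def)
    then show ?thesis using D_step[OF c'(1) o2 _ c'(2) vW e nV] by blast
  qed
qed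

lemma V_step:
  assumes vV: "v \<in> V - W" and o: "OM x st' v" and inv: "\<forall>ho. okL E Z st v ho \<longrightarrow> okL E Z st' v ho"
    and okl: "okL E Z st v (head_out k)" and okr: "okR E Z v k n"
    and e: "edge_ok E H v k n" and nV: "n \<in> V"
  shows "FW x (Some (v,k)) n"
proof -
  have okl': "okL E Z st' v (head_out k)" using inv okl by blast
  show ?thesis
  proof (cases "n \<in> W")
    case False
    then have nW': "n \<in> V - W" using nV by auto
    have eM: "edge_ok M HM v k n"
    proof (cases k)
      case Fwd then show ?thesis using e eM_Fwd[OF vV nW' dp_edge] by (simp add: edge_ok_def)
    next
      case Bwd then show ?thesis using e eM_Bwd[OF vV nW' dp_edge] by (simp add: edge_ok_def)
    next
      case Bi then show ?thesis using e eM_Bi direct_HM[OF _ vV nW'] by (simp add: edge_ok_def)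
    qed
    have o1: "OM x (Some(v,k)) n" by (rule mstep[OF o eM nW' okl' okr])
    show ?thesis using FW_nW[OF False o1] by blast
  next
    case nW: True
    show ?thesis
    proof (cases k)
      case Fwd
      then have vn: "(v,n) \<in> E" using e by (simp add: edge_ok_def)
      have mh: "markhead (Some (v,k))" using Fwd by (simp add: markhead_def head_in_def)
      show ?thesis
      proof (cases "v \<in> Z")
        case True
        then have "n \<in> sc E v" using okr Fwd by (simp add: okR_def)
        then have "(n,v) \<in> E\<^sup>*" unfolding sc_def anc_def by auto
        then obtain c where c: "c \<notin> W" "dpath_via E W n c" "(c,v) \<in> E\<^sup>*" using first_exit nW vV by blast
        have cV: "c \<in> V - W" using c dp_V by blast
        have dvc: "dpath_via E W v c" using dp_trans[OF dp_edge[OF vn] nW c(2)] .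
        have csc: "c \<in> sc E v" using c(3) dp_Es[OF dvc] unfolding sc_def anc_def desc_def by auto
        have o1: "OM x (Some(v,Fwd)) c"
          by (rule mstep[OF o eM_Fwd[OF vV cV dvc] cV]) (use okl' Fwd csc in \<open>simp_all add: okR_def head_out_def\<close>)
        have "okL E Z (Some(v,Fwd)) c True" using c(3) True unfolding okL_def anc_set_def anc_def by auto
        then show ?thesis using FW_D[OF nW cV o1 _ c(2)] by blast
      next
        case False
        have "okL E Z st' v False" using okl' Fwd by (simp add: head_out_def)
        then show ?thesis using FW_A[OF nW mh vV o _ False dp_edge[OF vn]] by blast
      qed
    next
      case Bwd
      then have nv: "(n,v) \<in> E" using e by (simp add: edge_ok_def)
      have "okL E Z st' v True" using okl' Bwd by (simp add: head_out_def)
      then show ?thesis using FW_D[OF nW vV o _ dp_edge[OF nv]] by blast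
    next
      case Bi
      then have "{v,n} \<in> H" using e by (simp add: edge_ok_def)
      moreover have "markhead (Some (v,k))" using Bi by (simp add: markhead_def head_in_def)
      moreover have "okL E Z st' v True" using okl' Bi by (simp add: head_out_def)
      ultimately show ?thesis using FW_C[OF nW _ vV o _ start_conf[OF _ nW]] by blast
    qed
  qed
qed

lemma fwd: "owalk V E H Z x st v \<Longrightarrow> x \<in> V - W \<Longrightarrow> FW x st v"
proof (induction rule: owalk.induct)
  case base
  have "OM x None x" using base by (auto intro: owalk.base)
  then show ?case using FW_nW[of x x None None] base by blast
next
  case (step st v k n)
  show ?case
  proof (cases "v \<in> W")
    case False
    then obtain st' where "OM x st' v" "\<forall>ho. okL E Z st v ho \<longrightarrow> okL E Z st' v ho"
      using step(6,7) unfolding FW_def by blast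
    moreover have "v \<in> V - W" using owalk_nodes[OF step(1)] False by blast
    ultimately show ?thesis using V_step step by blast
  next
    case vW: True
    then obtain c st' where c: "c \<in> V - W" "OM x st' c" and
      cs: "(markhead st \<and> ((okL E Z st' c False \<and> c \<notin> Z \<and> dpath_via E W c v) \<or> (okL E Z st' c True \<and> conf c v)))
         \<or> (okL E Z st' c True \<and> dpath_via E W v c)"
      using step(6,7) unfolding FW_def by blast
    have col: "markhead st \<Longrightarrow> head_out k \<longrightarrow> v \<in> anc_set E Z"
      using markhead_anc[of st v] step(4) by (cases "head_out k") auto
    show ?thesis
      using cs A_step[of c x st' v k n] C_step[of c x st' v k n] D_step[of c x st' v k n] col c vW step(2,3)
      by blast
  qed
qed

end



context mg
begin

abbreviation "OG x st c \<equiv> owalk V E H Z x st c"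

lemma fwd_chain:
  assumes o: "OG x st u" and uW: "u \<in> W" and dp: "dpath_via E W u n"
  shows "\<exists>p. OG x (Some (p,Fwd)) n"
proof -
  obtain m where m: "(u,m) \<in> R\<^sup>*" "(m,n) \<in> E" using dp unfolding dpath_via_def by blast
  have "\<exists>st. OG x st m \<and> m \<notin> Z"
    using m(1)
  proof (induction rule: rtrancl_induct)
    case base then show ?case using o uW ZW by blast
  next
    case (step y z)
    then obtain st1 where s: "OG x st1 y" "y \<notin> Z" by blast
    have yz: "(y,z) \<in> E" "z \<in> W" using step by auto
    have "OG x (Some (y,Fwd)) z"
      by (rule owalk.step[OF s(1)]) (use yz EV s(2) in \<open>auto simp: edge_ok_def okL_False okR_nZ head_out_def\<close>)
    then show ?case using yz ZW by blast
  qed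
  then obtain st1 where s: "OG x st1 m" "m \<notin> Z" by blast
  have "OG x (Some (m,Fwd)) n"
    by (rule owalk.step[OF s(1)]) (use m EV s(2) in \<open>auto simp: edge_ok_def okL_False okR_nZ head_out_def\<close>)
  then show ?thesis by blast
qed

lemma bwd_chain:
  assumes o: "OG x st v" and ok: "okL E Z st v True" and dp: "dpath_via E W n v"
  shows "\<exists>p. OG x (Some (p,Bwd)) n \<and> (n,p) \<in> E \<and> (p,v) \<in> E\<^sup>*"
proof -
  obtain m where m: "(n,m) \<in> R\<^sup>*" "(m,v) \<in> E" using dp unfolding dpath_via_def by blast
  have o1: "OG x (Some (v,Bwd)) m"
    by (rule owalk.step[OF o]) (use m EV ok in \<open>auto simp: edge_ok_def okR_def head_out_def\<close>)
  have Q: "\<forall>p. OG x (Some(p,Bwd)) m \<longrightarrow> (m,p) \<in> E \<longrightarrow> (p,v) \<in> E\<^sup>* \<longrightarrow>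
     (\<exists>p'. OG x (Some(p',Bwd)) n \<and> (n,p') \<in> E \<and> (p',v) \<in> E\<^sup>*)"
    using m(1)
  proof (induction rule: rtrancl_induct)
    case base then show ?case by blast
  next
    case (step y z)
    show ?case
    proof (intro allI impI)
      fix p assume a: "OG x (Some(p,Bwd)) z" "(z,p) \<in> E" "(p,v) \<in> E\<^sup>*"
      have yz: "(y,z) \<in> E" "z \<in> W" using step by auto
      have "OG x (Some (z,Bwd)) y"
        by (rule owalk.step[OF a(1)]) (use yz EV ZW in \<open>auto simp: edge_ok_def okL_def okR_def head_out_def head_in_def\<close>)
      moreover have "(z,v) \<in> E\<^sup>*" using a(2,3) by (meson converse_rtrancl_into_rtrancl)
      ultimately show "\<exists>p'. OG x (Some(p',Bwd)) n \<and> (n,p') \<in> E \<and> (p',v) \<in> E\<^sup>*"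
        using step.IH yz by blast
    qed
  qed
  then show ?thesis using o1 m(2) by blast
qed

lemma bwd: "OM x st' v \<Longrightarrow> x \<in> V - W \<Longrightarrow> \<exists>st. OG x st v \<and> (\<forall>ho. okL E Z st' v ho \<longrightarrow> okL E Z st v ho)"
proof (induction rule: owalk.induct)
  case base
  then have "OG x None x" by (auto intro: owalk.base)
  then show ?case by blast
next
  case (step st' v k n)
  obtain st where o: "OG x st v" and inv: "\<forall>ho. okL E Z st' v ho \<longrightarrow> okL E Z st v ho"
    using step by blast
  have vV: "v \<in> V - W" and pV: "\<forall>p k. st' = Some (p,k) \<longrightarrow> p \<in> V - W"
    using owalk_nodes[OF step(1)] by auto
  have nV: "n \<in> V - W" using step(3) .
  have okLE: "okL E Z st' v (head_out k)" using step(4) okL_M[OF vV pV] by simp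
  have okRE: "okR E Z v k n" using step(5) okR_M[OF vV nV] by simp
  have okG: "okL E Z st v (head_out k)" using inv okLE by blast
  show ?case
  proof (cases k)
    case Fwd
    then have dvn: "dpath_via E W v n" using step(2) M_dp by (simp add: edge_ok_def)
    from dp_cases[OF dvn] show ?thesis
    proof
      assume vn: "(v,n) \<in> E"
      have "OG x (Some (v,k)) n"
        by (rule owalk.step[OF o]) (use vn nV okG okRE Fwd in \<open>auto simp: edge_ok_def\<close>)
      then show ?thesis by blast
    next
      assume "\<exists>u. (v,u) \<in> E \<and> u \<in> W \<and> dpath_via E W u n"
      then obtain u where u: "(v,u) \<in> E" "u \<in> W" "dpath_via E W u n" by blast
      have "okR E Z v Fwd u"
      proof -
        have "v \<in> Z \<Longrightarrow> u \<in> sc E v"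
        proof -
          assume "v \<in> Z"
          then have "n \<in> sc E v" using okRE Fwd by (simp add: okR_def)
          then have "(n,v) \<in> E\<^sup>*" unfolding sc_def anc_def by auto
          moreover have "(u,n) \<in> E\<^sup>*" using dp_Es[OF u(3)] .
          ultimately have "(u,v) \<in> E\<^sup>*" by (rule rtrancl_trans[rotated])
          then show "u \<in> sc E v" using u(1) unfolding sc_def anc_def desc_def by auto
        qed
        then show ?thesis by (simp add: okR_def)
      qed
      moreover have "edge_ok E H v Fwd u" using u(1) by (simp add: edge_ok_def)
      moreover have "u \<in> V" using EV u(1) by blast
      moreover have "okL E Z st v (head_out Fwd)" using okG Fwd by simp
      ultimately have "OG x (Some (v,Fwd)) u"
        using owalk.step[OF o] by blast
      then obtain p where "OG x (Some (p,Fwd)) n" using fwd_chain u by blast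
      moreover have "\<forall>ho. okL E Z (Some(v,k)) n ho \<longrightarrow> okL E Z (Some(p,Fwd)) n ho"
        using Fwd by (simp add: okL_def)
      ultimately show ?thesis by blast
    qed
  next
    case Bwd
    then have dnv: "dpath_via E W n v" using step(2) M_dp by (simp add: edge_ok_def)
    have "okL E Z st v True" using okG Bwd by (simp add: head_out_def)
    then obtain p where p: "OG x (Some (p,Bwd)) n" "(n,p) \<in> E" "(p,v) \<in> E\<^sup>*" using bwd_chain[OF o _ dnv] by blast
    have "\<forall>ho. okL E Z (Some(v,k)) n ho \<longrightarrow> okL E Z (Some(p,Bwd)) n ho"
    proof (intro allI impI)
      fix ho assume a: "okL E Z (Some(v,k)) n ho"
      have "n \<in> Z \<Longrightarrow> p \<in> sc E n"
      proof -
        assume "n \<in> Z"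
        then have "v \<in> sc E n" using a Bwd by (simp add: okL_def head_in_def)
        then have "(v,n) \<in> E\<^sup>*" unfolding sc_def anc_def by auto
        then have "(p,n) \<in> E\<^sup>*" using p(3) by (rule rtrancl_trans[rotated])
        then show "p \<in> sc E n" using p(2) unfolding sc_def anc_def desc_def by auto
      qed
      then show "okL E Z (Some(p,Bwd)) n ho" by (simp add: okL_def head_in_def)
    qed
    then show ?thesis using p by blast
  next
    case Bi
    then have vn: "v \<noteq> n" "{v,n} \<in> HM" using step(2) by (auto simp: edge_ok_def)
    have "\<exists>F\<in>H. F \<subseteq> {v,n} \<union> W \<and> (v \<in> F - W \<or> (\<exists>u\<in>F \<inter> W. dpath_via E W u v))
           \<and> (n \<in> F - W \<or> (\<exists>u\<in>F \<inter> W. dpath_via E W u n))"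
      using vn(2) unfolding marg_H_def by (simp, blast)
    then obtain F where F: "F \<in> H" "F \<subseteq> {v,n} \<union> W"
      and Fv: "v \<in> F - W \<or> (\<exists>u\<in>F \<inter> W. dpath_via E W u v)"
      and Fn: "n \<in> F - W \<or> (\<exists>u\<in>F \<inter> W. dpath_via E W u n)" by blast
    have okT: "okL E Z st v True" using okG Bi by (simp add: head_out_def)
    have FV: "F \<subseteq> V" using HV F(1) by blast
    obtain st1 a where L: "OG x st1 a" "okL E Z st1 a True" "a \<in> F" "a = v \<or> a \<in> W"
    proof (cases "v \<in> F")
      case True show ?thesis by (rule that[OF o okT True]) simp
    next
      case False
      then obtain u where u: "u \<in> F \<inter> W" "dpath_via E W u v" using Fv by blast
      obtain p where p: "OG x (Some (p,Bwd)) u" using bwd_chain[OF o okT u(2)] by blast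
      have "u \<notin> Z" using u ZW by blast
      then have okp: "okL E Z (Some (p,Bwd)) u True" by (simp add: okL_def head_in_def)
      show ?thesis by (rule that[OF p okp]) (use u in simp_all)
    qed
    have an: "a \<noteq> n" using L(4) vn nV by blast
    have aV: "a \<in> V" using L(3) FV by blast
    have "\<exists>p k2. OG x (Some (p,k2)) n \<and> head_in k2"
    proof (cases "n \<in> F")
      case True
      have "{a,n} \<subseteq> F" using True L(3) by blast
      then have H1: "{a,n} \<in> H" using Hsub[OF F(1)] by blast
      have e1: "edge_ok E H a Bi n" using H1 an by (simp add: edge_ok_def)
      have "OG x (Some (a,Bi)) n"
        by (rule owalk.step[OF L(1) e1]) (use nV L(2) in \<open>simp_all add: okR_def head_out_def\<close>)
      then show ?thesis by (auto simp: head_in_def)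
    next
      case False
      then obtain u' where u': "u' \<in> F \<inter> W" "dpath_via E W u' n" using Fn by blast
      show ?thesis
      proof (cases "a = u'")
        case True
        then obtain p where "OG x (Some (p,Fwd)) n" using fwd_chain[of x st1 a n] L(1) u' by blast
        then show ?thesis by (auto simp: head_in_def)
      next
        case au: False
        have "{a,u'} \<subseteq> F" using u' L(3) by blast
        then have H1: "{a,u'} \<in> H" using Hsub[OF F(1)] by blast
        have e1: "edge_ok E H a Bi u'" using H1 au by (simp add: edge_ok_def)
        have u'V: "u' \<in> V" using u' FV by blast
        have o2: "OG x (Some (a,Bi)) u'"
          by (rule owalk.step[OF L(1) e1 u'V]) (use L(2) in \<open>simp_all add: okR_def head_out_def\<close>)
        obtain p where "OG x (Some (p,Fwd)) n" using fwd_chain[OF o2 _ u'(2)] u' by blast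
        then show ?thesis by (auto simp: head_in_def)
      qed
    qed
    then obtain p k2 where pk: "OG x (Some (p,k2)) n" "head_in k2" by blast
    have "\<forall>ho. okL E Z (Some(v,k)) n ho \<longrightarrow> okL E Z (Some(p,k2)) n ho"
      using Bi pk(2) by (cases k2) (auto simp: okL_def head_in_def)
    then show ?thesis using pk by blast
  qed
qed

lemma equiv_walk: "x \<in> V - W \<Longrightarrow> y \<in> V - W \<Longrightarrow> (\<exists>st. OG x st y) \<longleftrightarrow> (\<exists>st. OM x st y)"
  using fwd bwd unfolding FW_def by blast

end

theorem mainTheorem6:
  fixes V :: "'a set" and E :: "('a \<times> 'a) set" and H :: "'a set set"
    and W X Y Z :: "'a set"
  assumes "hedg V E H"
    and "W \<subseteq> V" and "X \<subseteq> V" and "Y \<subseteq> V" and "Z \<subseteq> V"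
    and "(X \<union> Y \<union> Z) \<inter> W = {}"
  shows "sigma_sep V E H X Y Z \<longleftrightarrow>
         sigma_sep (V - W) (marg_E V E W) (marg_H V E H W) X Y Z"
proof -
  interpret mg V E H W Z using assms by unfold_locales auto
  have XY: "\<And>x. x \<in> X \<union> Y \<Longrightarrow> x \<in> V - W" using assms by auto
  have "\<And>x y. (x \<in> X \<and> y \<in> Y \<or> x \<in> Y \<and> y \<in> X) \<Longrightarrow>
      (\<exists>st. owalk V E H Z x st y \<and> y \<notin> Z) \<longleftrightarrow> (\<exists>st. owalk (V - W) (marg_E V E W) (marg_H V E H W) Z x st y \<and> y \<notin> Z)"
  proof -
    fix x y assume "x \<in> X \<and> y \<in> Y \<or> x \<in> Y \<and> y \<in> X"
    then have "x \<in> V - W" "y \<in> V - W" using XY by auto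
    then show "(\<exists>st. owalk V E H Z x st y \<and> y \<notin> Z) \<longleftrightarrow> (\<exists>st. owalk (V - W) (marg_E V E W) (marg_H V E H W) Z x st y \<and> y \<notin> Z)"
      using equiv_walk by blast
  qed
  then show ?thesis unfolding sep_iff_owalk by blast
qed


end
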